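(* Let $K\subset\mathbb{R}^n$ be a strongly convex body with parameter $k>0$ and diameter $d$. If $\sigma\asymp(k\sqrt n)^{-1}$, then $\varepsilon_K(\sigma)\gtrsim d$.
   Context: $K$ is strongly convex with parameter $k$ if for all $\mu,\nu\in K$ and $\lambda\in[0,1]$, the closed Euclidean ball $B(\lambda\mu+(1-\lambda)\nu,\,k\lambda(1-\lambda)\|\mu-\nu\|^2)$ is contained in $K$. Gaussian sequence model: $Y=\mu+\xi$, $\mu\in K$, $\xi\sim N(0,\sigma^2\mathbb{I}_n)$; LSE $\hat\mu=\operatorname{argmin}_{\nu\in K}\|Y-\nu\|_2^2$; $\varepsilon_K(\sigma)^2=\sup_{\mu\in K}\mathbb{E}_\mu\|\hat\mu-\mu\|_2^2$. $\asymp,\gtrsim$ hide absolute constants. *)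

theory Defs
  imports "HOL-Probability.Probability"
begin

text \<open>Vectors of R^n are represented as functions nat => real; only coordinates i < n matter.
  Points of R^n are the extensional functions in rvec n.\<close>

definition rvec :: "nat \<Rightarrow> (nat \<Rightarrow> real) set" where
  "rvec n = PiE {..<n} (\<lambda>_. UNIV)"

definition vnorm :: "nat \<Rightarrow> (nat \<Rightarrow> real) \<Rightarrow> real" where
  "vnorm n x = sqrt (\<Sum>i<n. (x i)^2)"

definition vdist :: "nat \<Rightarrow> (nat \<Rightarrow> real) \<Rightarrow> (nat \<Rightarrow> real) \<Rightarrow> real" where
  "vdist n x y = vnorm n (\<lambda>i. x i - y i)"

definition vcomb :: "nat \<Rightarrow> real \<Rightarrow> (nat \<Rightarrow> real) \<Rightarrow> (nat \<Rightarrow> real) \<Rightarrow> (nat \<Rightarrow> real)" where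
  "vcomb n l x y = (\<lambda>i\<in>{..<n}. l * x i + (1 - l) * y i)"

definition vadd :: "nat \<Rightarrow> (nat \<Rightarrow> real) \<Rightarrow> (nat \<Rightarrow> real) \<Rightarrow> (nat \<Rightarrow> real)" where
  "vadd n x y = (\<lambda>i\<in>{..<n}. x i + y i)"

definition ncball :: "nat \<Rightarrow> (nat \<Rightarrow> real) \<Rightarrow> real \<Rightarrow> (nat \<Rightarrow> real) set" where
  "ncball n c r = {x \<in> rvec n. vdist n x c \<le> r}"

definition convex_body :: "nat \<Rightarrow> (nat \<Rightarrow> real) set \<Rightarrow> bool" where
  "convex_body n K \<longleftrightarrow>
     K \<subseteq> rvec n
     \<and> (\<forall>x\<in>rvec n. (\<forall>e>0. \<exists>y\<in>K. vdist n x y < e) \<longrightarrow> x \<in> K)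
     \<and> (\<exists>R. \<forall>x\<in>K. vnorm n x \<le> R)
     \<and> (\<forall>x\<in>K. \<forall>y\<in>K. \<forall>l\<in>{0..1}. vcomb n l x y \<in> K)
     \<and> (\<exists>x\<in>K. \<exists>r>0. ncball n x r \<subseteq> K)"

definition strongly_convex :: "nat \<Rightarrow> real \<Rightarrow> (nat \<Rightarrow> real) set \<Rightarrow> bool" where
  "strongly_convex n k K \<longleftrightarrow>
     (\<forall>\<mu>\<in>K. \<forall>\<nu>\<in>K. \<forall>l\<in>{0..1}.
        ncball n (vcomb n l \<mu> \<nu>) (k * l * (1 - l) * (vdist n \<mu> \<nu>)^2) \<subseteq> K)"

definition diam :: "nat \<Rightarrow> (nat \<Rightarrow> real) set \<Rightarrow> real" where
  "diam n K = Sup {vdist n \<mu> \<nu> | \<mu> \<nu>. \<mu> \<in> K \<and> \<nu> \<in> K}"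

text \<open>Least squares estimator: a minimiser of |Y - nu|^2 over K (unique for closed convex K).\<close>
definition lse :: "nat \<Rightarrow> (nat \<Rightarrow> real) set \<Rightarrow> (nat \<Rightarrow> real) \<Rightarrow> (nat \<Rightarrow> real)" where
  "lse n K Y = (SOME \<nu>. \<nu> \<in> K \<and> (\<forall>\<nu>'\<in>K. (vdist n Y \<nu>)^2 \<le> (vdist n Y \<nu>')^2))"

definition gauss :: "nat \<Rightarrow> real \<Rightarrow> (nat \<Rightarrow> real) measure" where
  "gauss n \<sigma> = PiM {..<n} (\<lambda>_. density lborel (normal_density 0 \<sigma>))"

definition risk :: "nat \<Rightarrow> (nat \<Rightarrow> real) set \<Rightarrow> real \<Rightarrow> (nat \<Rightarrow> real) \<Rightarrow> real" where
  "risk n K \<sigma> \<mu> = (\<integral>\<xi>. (vdist n (lse n K (vadd n \<mu> \<xi>)) \<mu>)^2 \<partial>gauss n \<sigma>)"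

definition eps :: "nat \<Rightarrow> (nat \<Rightarrow> real) set \<Rightarrow> real \<Rightarrow> real" where
  "eps n K \<sigma> = sqrt (Sup (risk n K \<sigma> ` K))"

end

theory Submission
  imports Defs
begin


definition ip :: "nat \<Rightarrow> (nat \<Rightarrow> real) \<Rightarrow> (nat \<Rightarrow> real) \<Rightarrow> real" where
  "ip n x y = (\<Sum>i<n. x i * y i)"

lemma vnorm_L2: "vnorm n x = L2_set x {..<n}"
  by (simp add: vnorm_def L2_set_def)

lemma vnorm_nonneg[simp]: "0 \<le> vnorm n x"
  by (simp add: vnorm_def sum_nonneg)

lemma vnorm_sq: "(vnorm n x)^2 = (\<Sum>i<n. (x i)^2)"
  by (simp add: vnorm_def sum_nonneg)

lemma vdist_nonneg[simp]: "0 \<le> vdist n x y"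
  by (simp add: vdist_def)

lemma vdist_sq: "(vdist n x y)^2 = (\<Sum>i<n. (x i - y i)^2)"
  by (simp add: vdist_def vnorm_sq)

lemma vnorm_cong: "(\<And>i. i < n \<Longrightarrow> x i = y i) \<Longrightarrow> vnorm n x = vnorm n y"
  by (simp add: vnorm_def)

lemma vdist_sym: "vdist n x y = vdist n y x"
  unfolding vdist_def vnorm_def by (simp add: power2_commute)

lemma vnorm_triangle: "vnorm n (\<lambda>i. x i + y i) \<le> vnorm n x + vnorm n y"
  unfolding vnorm_L2 by (rule L2_set_triangle_ineq)

lemma vdist_triangle: "vdist n x z \<le> vdist n x y + vdist n y z"
proof -
  have "vdist n x z = vnorm n (\<lambda>i. (x i - y i) + (y i - z i))"
    by (simp add: vdist_def)
  also have "\<dots> \<le> vdist n x y + vdist n y z"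
    unfolding vdist_def by (rule vnorm_triangle)
  finally show ?thesis .
qed

lemma ip_cs: "ip n x y \<le> vnorm n x * vnorm n y"
proof -
  have "ip n x y \<le> (\<Sum>i<n. \<bar>x i\<bar> * \<bar>y i\<bar>)"
    unfolding ip_def by (rule sum_mono) (metis abs_ge_self abs_mult)
  also have "\<dots> \<le> vnorm n x * vnorm n y"
    unfolding vnorm_L2 by (rule L2_set_mult_ineq)
  finally show ?thesis .
qed

lemma vnorm_le_sum_abs: "vnorm n x \<le> (\<Sum>i<n. \<bar>x i\<bar>)"
  unfolding vnorm_L2 by (rule L2_set_le_sum_abs)

lemma ip_self: "ip n x x = (vnorm n x)^2"
  by (simp add: ip_def vnorm_sq[symmetric] power2_eq_square[symmetric])

lemma sum_sq_expand:
  "(\<Sum>i<n. (a i + t * b i)^2) = (\<Sum>i<n. (a i)^2) + 2 * t * ip n a b + t^2 * (\<Sum>i<n. (b i)^2)"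
  by (simp add: ip_def power2_eq_square algebra_simps sum.distrib sum_distrib_left)

lemma vnorm_scale: "vnorm n (\<lambda>i. c * x i) = \<bar>c\<bar> * vnorm n x"
  unfolding vnorm_def by (simp add: power_mult_distrib sum_distrib_left[symmetric] real_sqrt_mult)



lemma cb_sub: "convex_body n K \<Longrightarrow> K \<subseteq> rvec n" by (simp add: convex_body_def)
lemma cb_closed: "convex_body n K \<Longrightarrow> x \<in> rvec n \<Longrightarrow> (\<And>e. e > 0 \<Longrightarrow> \<exists>y\<in>K. vdist n x y < e) \<Longrightarrow> x \<in> K"
  by (simp add: convex_body_def)
lemma cb_convex: "convex_body n K \<Longrightarrow> x \<in> K \<Longrightarrow> y \<in> K \<Longrightarrow> 0 \<le> l \<Longrightarrow> l \<le> 1 \<Longrightarrow> vcomb n l x y \<in> K"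
  by (simp add: convex_body_def)
lemma cb_ne: "convex_body n K \<Longrightarrow> K \<noteq> {}"
  by (auto simp add: convex_body_def)

lemma coord_le_vnorm: "i < n \<Longrightarrow> \<bar>x i\<bar> \<le> vnorm n x"
  unfolding vnorm_L2 using member_le_L2_set[of "{..<n}" i "\<lambda>i. \<bar>x i\<bar>"]
  by (simp add: L2_set_def)

lemma parallelogram:
  "(vdist n x y)^2 = 2 * (vdist n Y x)^2 + 2 * (vdist n Y y)^2 - 4 * (vdist n Y (vcomb n (1/2) x y))^2"
proof -
  have "\<And>i. i < n \<Longrightarrow> (x i - y i)^2 = 2 * (Y i - x i)^2 + 2 * (Y i - y i)^2 - 4 * (Y i - vcomb n (1/2) x y i)^2"
    by (simp add: vcomb_def power2_eq_square algebra_simps)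
  then have "(\<Sum>i<n. (x i - y i)^2) = (\<Sum>i<n. 2 * (Y i - x i)^2 + 2 * (Y i - y i)^2 - 4 * (Y i - vcomb n (1/2) x y i)^2)"
    by (intro sum.cong) auto
  then show ?thesis unfolding vdist_sq
    by (simp add: sum_subtractf sum.distrib sum_distrib_left)
qed

lemma proj_exists:
  assumes K: "convex_body n K"
  shows "\<exists>p\<in>K. \<forall>x\<in>K. vdist n Y p \<le> vdist n Y x"
proof -
  define S where "S = vdist n Y ` K"
  have Sne: "S \<noteq> {}" using cb_ne[OF K] by (simp add: S_def)
  have Sbdd: "bdd_below S" unfolding S_def by (rule bdd_belowI[of _ 0]) auto
  define \<delta> where "\<delta> = Inf S"
  have \<delta>le: "\<delta> \<le> vdist n Y x" if "x \<in> K" for x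
    unfolding \<delta>_def S_def using that Sbdd S_def by (intro cInf_lower) auto
  have \<delta>nn: "0 \<le> \<delta>" unfolding \<delta>_def using Sne by (intro cInf_greatest) (auto simp: S_def)
  have "\<exists>x\<in>K. vdist n Y x < \<delta> + 1 / (Suc j)" for j :: nat
  proof -
    have "Inf S < \<delta> + 1 / Suc j" by (simp add: \<delta>_def)
    from cInf_lessD[OF Sne this] show ?thesis by (auto simp: S_def)
  qed
  then obtain x where xK: "\<And>j. x j \<in> K" and xd: "\<And>j. vdist n Y (x j) < \<delta> + 1 / (Suc j)"
    by metis
  have close: "(vdist n (x j) (x l))^2 \<le> 4 * (2 * \<delta> + 1) / Suc N" if "j \<ge> N" "l \<ge> N" for j l N
  proof -
    have e: "1 / real (Suc j) \<le> 1 / Suc N" "1 / real (Suc l) \<le> 1 / Suc N"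
      using that by (auto simp: field_simps)
    have e1: "1 / real (Suc N) \<le> 1" by simp
    have m: "\<delta> \<le> vdist n Y (vcomb n (1/2) (x j) (x l))"
      by (rule \<delta>le, rule cb_convex[OF K xK xK]) auto
    have a: "(vdist n Y (x j))^2 \<le> (\<delta> + 1 / Suc N)^2"
      using xd[of j] e by (intro power_mono) auto
    have b: "(vdist n Y (x l))^2 \<le> (\<delta> + 1 / Suc N)^2"
      using xd[of l] e by (intro power_mono) auto
    have c: "\<delta>^2 \<le> (vdist n Y (vcomb n (1/2) (x j) (x l)))^2"
      using m \<delta>nn by (intro power_mono) auto
    have "(vdist n (x j) (x l))^2 \<le> 4 * (\<delta> + 1 / Suc N)^2 - 4 * \<delta>^2"
      using parallelogram[of n "x j" "x l" Y] a b c by linarith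
    also have "\<dots> = 4 * (1 / Suc N) * (2 * \<delta> + 1 / Suc N)"
      by (simp add: power2_eq_square algebra_simps)
    also have "\<dots> \<le> 4 * (1 / Suc N) * (2 * \<delta> + 1)"
      using e1 \<delta>nn by (intro mult_left_mono) auto
    finally show ?thesis by simp
  qed
  have cauchy: "Cauchy (\<lambda>j. x j i)" if "i < n" for i
  proof (rule metric_CauchyI)
    fix e :: real assume e: "e > 0"
    obtain N :: nat where N0: "4 * (2 * \<delta> + 1) / e^2 < N"
      using reals_Archimedean2 by blast
    have N: "4 * (2 * \<delta> + 1) / e^2 < Suc N" using N0 by simp
    have e2: "0 < e^2" using e by simp
    have "4 * (2 * \<delta> + 1) < Suc N * e^2" using N e2 by (simp add: pos_divide_less_eq)
    then have "4 * (2 * \<delta> + 1) / Suc N < e^2"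
      by (simp add: pos_divide_less_eq mult.commute)
    show "\<exists>M. \<forall>m\<ge>M. \<forall>l\<ge>M. dist (x m i) (x l i) < e"
    proof (intro exI allI impI)
      fix m l assume "m \<ge> N" "l \<ge> N"
      have "\<bar>x m i - x l i\<bar> \<le> vdist n (x m) (x l)"
        unfolding vdist_def using coord_le_vnorm[OF that, of "\<lambda>i. x m i - x l i"] by simp
      moreover have "(vdist n (x m) (x l))^2 < e^2"
        using close[OF \<open>m \<ge> N\<close> \<open>l \<ge> N\<close>] \<open>4 * (2 * \<delta> + 1) / Suc N < e^2\<close> by linarith
      then have "vdist n (x m) (x l) < e" using e by (meson power_less_imp_less_base less_imp_le)
      ultimately show "dist (x m i) (x l i) < e" by (simp add: dist_real_def)
    qed
  qed
  define z where "z = (\<lambda>i\<in>{..<n}. lim (\<lambda>j. x j i))"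
  have zr: "z \<in> rvec n" by (simp add: z_def rvec_def)
  have conv: "(\<lambda>j. x j i) \<longlonglongrightarrow> z i" if "i < n" for i
    using cauchy[OF that] that by (simp add: z_def Cauchy_convergent_iff convergent_LIMSEQ_iff)
  have sumc: "(\<lambda>j. \<Sum>i<n. \<bar>x j i - z i\<bar>) \<longlonglongrightarrow> 0"
  proof -
    have "(\<lambda>j. \<Sum>i<n. \<bar>x j i - z i\<bar>) \<longlonglongrightarrow> (\<Sum>i<n. \<bar>z i - z i\<bar>)"
      by (intro tendsto_sum tendsto_rabs tendsto_diff conv tendsto_const) auto
    then show ?thesis by simp
  qed
  have dconv: "(\<lambda>j. vdist n (x j) z) \<longlonglongrightarrow> 0"
  proof (rule Lim_null_comparison[OF _ sumc])
    show "\<forall>\<^sub>F j in sequentially. norm (vdist n (x j) z) \<le> (\<Sum>i<n. \<bar>x j i - z i\<bar>)"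
      unfolding vdist_def using vnorm_le_sum_abs by (auto intro!: always_eventually)
  qed
  have zK: "z \<in> K"
  proof (rule cb_closed[OF K zr])
    fix e :: real assume "e > 0"
    from order_tendstoD(2)[OF dconv this] obtain j where "vdist n (x j) z < e"
      by (auto simp: eventually_sequentially)
    then show "\<exists>y\<in>K. vdist n z y < e" using xK vdist_sym by metis
  qed
  have inv: "(\<lambda>j. 1 / real (Suc j)) \<longlonglongrightarrow> 0"
    using LIMSEQ_Suc[OF lim_inverse_n] by (simp add: divide_inverse)
  have lim2: "(\<lambda>j. \<delta> + 1 / real (Suc j) + vdist n (x j) z) \<longlonglongrightarrow> \<delta>"
    using tendsto_add[OF tendsto_add[OF tendsto_const[of \<delta>] inv] dconv] by simp
  have "vdist n Y z \<le> \<delta>"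
  proof (rule LIMSEQ_le_const[OF lim2])
    show "\<exists>N. \<forall>j\<ge>N. vdist n Y z \<le> \<delta> + 1 / real (Suc j) + vdist n (x j) z"
    proof (intro exI allI impI)
      fix j :: nat
      have "vdist n Y z \<le> vdist n Y (x j) + vdist n (x j) z" by (rule vdist_triangle)
      then show "vdist n Y z \<le> \<delta> + 1 / real (Suc j) + vdist n (x j) z"
        using xd[of j] by linarith
    qed
  qed
  then show ?thesis using zK \<delta>le by (meson order_trans)
qed

lemma lse_prop:
  assumes K: "convex_body n K"
  shows "lse n K Y \<in> K" "\<And>x. x \<in> K \<Longrightarrow> vdist n Y (lse n K Y) \<le> vdist n Y x"
proof -
  obtain p where "p \<in> K" "\<forall>x\<in>K. vdist n Y p \<le> vdist n Y x" using proj_exists[OF K] by blast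
  then have "\<exists>\<nu>. \<nu> \<in> K \<and> (\<forall>\<nu>'\<in>K. (vdist n Y \<nu>)^2 \<le> (vdist n Y \<nu>')^2)"
    by (intro exI[of _ p]) (auto intro: power_mono)
  from someI_ex[OF this] have "lse n K Y \<in> K \<and> (\<forall>\<nu>'\<in>K. (vdist n Y (lse n K Y))^2 \<le> (vdist n Y \<nu>')^2)"
    unfolding lse_def .
  then show "lse n K Y \<in> K" "\<And>x. x \<in> K \<Longrightarrow> vdist n Y (lse n K Y) \<le> vdist n Y x"
    by (auto intro: power2_le_imp_le)
qed



lemma ip_cong: "(\<And>i. i < n \<Longrightarrow> x i = x' i) \<Longrightarrow> (\<And>i. i < n \<Longrightarrow> y i = y' i) \<Longrightarrow> ip n x y = ip n x' y'"
  unfolding ip_def by (intro sum.cong) auto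

lemma ip_add_scale: "ip n u (\<lambda>i. a i + c * u i) = ip n u a + c * (vnorm n u)^2"
proof -
  have "ip n u (\<lambda>i. a i + c * u i) = ip n u a + c * ip n u u"
    by (simp add: ip_def sum.distrib sum_distrib_left algebra_simps)
  then show ?thesis by (simp add: ip_self)
qed

lemma var_ineq:
  assumes K: "convex_body n K" and x: "x \<in> K"
  shows "ip n (\<lambda>i. Y i - lse n K Y i) (\<lambda>i. x i - lse n K Y i) \<le> 0"
proof -
  define p where "p = lse n K Y"
  have pK: "p \<in> K" using lse_prop(1)[OF K] by (simp add: p_def)
  define u where "u = (\<lambda>i. Y i - p i)"
  define v where "v = (\<lambda>i. x i - p i)"
  define a where "a = ip n u v"
  define b where "b = (\<Sum>i<n. (v i)^2)"
  have b0: "0 \<le> b" by (simp add: b_def sum_nonneg)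
  have key: "2 * t * a \<le> t^2 * b" if t: "0 < t" "t \<le> 1" for t
  proof -
    have wK: "vcomb n t x p \<in> K" using cb_convex[OF K x pK] t by auto
    have "vdist n Y p \<le> vdist n Y (vcomb n t x p)"
      using lse_prop(2)[OF K wK] by (simp add: p_def)
    then have "(vdist n Y p)^2 \<le> (vdist n Y (vcomb n t x p))^2"
      by (intro power_mono) auto
    moreover have "(vdist n Y (vcomb n t x p))^2 = (\<Sum>i<n. (u i + (-t) * v i)^2)"
      unfolding vdist_sq by (intro sum.cong) (auto simp: vcomb_def u_def v_def algebra_simps)
    moreover have "(vdist n Y p)^2 = (\<Sum>i<n. (u i)^2)"
      unfolding vdist_sq u_def ..
    ultimately show ?thesis unfolding sum_sq_expand a_def b_def by simp
  qed
  show ?thesis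
  proof (rule ccontr)
    assume "\<not> ?thesis"
    then have a0: "a > 0" by (simp add: a_def u_def v_def p_def)
    show False
    proof (cases "b \<le> a")
      case True
      from key[of 1] have "2 * a \<le> b" by simp
      with True a0 show False by simp
    next
      case False
      then have bpos: "b > 0" using a0 by simp
      define t where "t = a / b"
      have t: "0 < t" "t \<le> 1" using False a0 bpos by (auto simp: t_def)
      from key[OF t] have "2 * t * a \<le> t * (t * b)" by (simp add: power2_eq_square)
      then have "2 * a \<le> t * b" using t by simp
      also have "t * b = a" using bpos by (simp add: t_def)
      finally show False using a0 by simp
    qed
  qed
qed

lemma strong_var:
  assumes K: "convex_body n K" and SC: "strongly_convex n k K" and k: "k \<ge> 0" and z: "z \<in> K"
  shows "ip n (\<lambda>i. Y i - lse n K Y i) (\<lambda>i. z i - lse n K Y i)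
           \<le> - (k / 2) * vdist n Y (lse n K Y) * (vdist n z (lse n K Y))^2"
proof -
  define p where "p = lse n K Y"
  have pK: "p \<in> K" using lse_prop(1)[OF K] by (simp add: p_def)
  define u where "u = (\<lambda>i. Y i - p i)"
  define nu where "nu = vnorm n u"
  have nu: "vdist n Y p = nu" by (simp add: nu_def u_def vdist_def)
  show ?thesis
  proof (cases "nu = 0")
    case True
    have "ip n u (\<lambda>i. z i - p i) \<le> vnorm n u * vnorm n (\<lambda>i. z i - p i)" by (rule ip_cs)
    moreover have "vnorm n u = 0" using True nu_def by simp
    ultimately have "ip n u (\<lambda>i. z i - p i) \<le> 0" by simp
    then show ?thesis using True nu by (simp add: p_def[symmetric] u_def[symmetric])
  next
    case False
    then have nupos: "nu > 0" using vnorm_nonneg[of n u] unfolding nu_def by linarith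
    define w where "w = vcomb n (1/2) p z"
    define \<rho> where "\<rho> = k * (1/2) * (1 - 1/2) * (vdist n p z)^2"
    have \<rho>0: "\<rho> \<ge> 0" using k by (simp add: \<rho>_def)
    define x where "x = (\<lambda>i\<in>{..<n}. w i + (\<rho> / nu) * u i)"
    have xr: "x \<in> rvec n" by (simp add: x_def rvec_def)
    have "vdist n x w = vnorm n (\<lambda>i. (\<rho> / nu) * u i)"
      unfolding vdist_def by (intro vnorm_cong) (simp add: x_def)
    also have "\<dots> = \<rho>" using nupos \<rho>0 by (subst vnorm_scale) (simp add: nu_def[symmetric])
    finally have "x \<in> ncball n w \<rho>" using xr by (simp add: ncball_def)
    moreover have "ncball n w \<rho> \<subseteq> K"
    proof -
      have l: "(1/2::real) \<in> {0..1}" by simp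
      show ?thesis using SC pK z l unfolding strongly_convex_def w_def \<rho>_def by blast
    qed
    ultimately have xK: "x \<in> K" by blast
    have vi: "ip n u (\<lambda>i. x i - p i) \<le> 0"
      using var_ineq[OF K xK, of Y] by (simp add: u_def p_def)
    have "ip n u (\<lambda>i. x i - p i) = ip n u (\<lambda>i. (1/2) * (z i - p i) + (\<rho> / nu) * u i)"
      by (intro ip_cong) (auto simp: x_def w_def vcomb_def field_simps)
    also have "\<dots> = ip n u (\<lambda>i. (1/2) * (z i - p i)) + (\<rho> / nu) * (vnorm n u)^2"
      by (rule ip_add_scale)
    also have "ip n u (\<lambda>i. (1/2) * (z i - p i)) = (1/2) * ip n u (\<lambda>i. z i - p i)"
      by (simp add: ip_def sum_distrib_left sum_divide_distrib[symmetric] algebra_simps diff_divide_distrib)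
    also have "(\<rho> / nu) * (vnorm n u)^2 = \<rho> * nu"
      using nupos by (simp add: nu_def[symmetric] power2_eq_square)
    finally have "ip n u (\<lambda>i. z i - p i) \<le> - 2 * \<rho> * nu" using vi by simp
    moreover have "vdist n p z = vdist n z p" by (rule vdist_sym)
    ultimately show ?thesis
      by (simp add: \<rho>_def nu p_def[symmetric] u_def[symmetric] algebra_simps)
  qed
qed

lemma proj_lip:
  assumes K: "convex_body n K" and SC: "strongly_convex n k K" and k: "k \<ge> 0"
  shows "vdist n (lse n K Y) (lse n K Y') * (1 + (k/2) * (vdist n Y (lse n K Y) + vdist n Y' (lse n K Y')))
           \<le> vdist n Y Y'"
proof -
  define p where "p = lse n K Y"
  define q where "q = lse n K Y'"
  have pK: "p \<in> K" using lse_prop(1)[OF K] by (simp add: p_def)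
  have qK: "q \<in> K" using lse_prop(1)[OF K] by (simp add: q_def)
  define A where "A = vdist n Y p"
  define B where "B = vdist n Y' q"
  define D where "D = vdist n p q"
  have h1: "ip n (\<lambda>i. Y i - p i) (\<lambda>i. q i - p i) \<le> - (k/2) * A * D^2"
    using strong_var[OF K SC k qK, of Y] by (simp add: p_def A_def D_def vdist_sym)
  have h2: "ip n (\<lambda>i. Y' i - q i) (\<lambda>i. p i - q i) \<le> - (k/2) * B * D^2"
    using strong_var[OF K SC k pK, of Y'] by (simp add: q_def B_def D_def)
  have sum: "ip n (\<lambda>i. Y i - p i) (\<lambda>i. q i - p i) + ip n (\<lambda>i. Y' i - q i) (\<lambda>i. p i - q i)
      = D^2 - ip n (\<lambda>i. p i - q i) (\<lambda>i. Y i - Y' i)"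
    unfolding D_def vdist_sq ip_def
    by (simp add: sum.distrib[symmetric] sum_subtractf[symmetric] power2_eq_square algebra_simps)
  have cs: "ip n (\<lambda>i. p i - q i) (\<lambda>i. Y i - Y' i) \<le> D * vdist n Y Y'"
    using ip_cs[of n "\<lambda>i. p i - q i" "\<lambda>i. Y i - Y' i"] by (simp add: D_def vdist_def)
  have A0: "A \<ge> 0" "B \<ge> 0" "D \<ge> 0" by (simp_all add: A_def B_def D_def)
  have ee: "D^2 * (1 + (k/2) * (A + B)) = D^2 + (- (k/2) * A * D^2) * (-1) + (- (k/2) * B * D^2) * (-1)"
    by (simp add: algebra_simps)
  have "D^2 * (1 + (k/2) * (A + B)) \<le> D * vdist n Y Y'"
    unfolding ee using h1 h2 sum cs by linarith
  then have "D * (D * (1 + (k/2) * (A + B))) \<le> D * vdist n Y Y'"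
    by (simp add: power2_eq_square mult.assoc)
  then have "D * (1 + (k/2) * (A + B)) \<le> vdist n Y Y' \<or> D = 0"
    using A0 by (metis mult_le_cancel_left_pos order_le_less)
  then show ?thesis
    using A0 by (auto simp: A_def B_def D_def p_def q_def)
qed

lemma proj_mid:
  assumes K: "convex_body n K" and ball: "ncball n m r \<subseteq> K" and r: "r \<ge> 0"
  shows "min (vdist n Y m) r \<le> vdist n (lse n K Y) m"
proof -
  define p where "p = lse n K Y"
  define u where "u = (\<lambda>i. Y i - p i)"
  define nu where "nu = vnorm n u"
  show ?thesis
  proof (cases "nu = 0")
    case True
    then have "\<forall>i<n. u i = 0"
      using coord_le_vnorm[of _ n u] nu_def by fastforce
    then have "vdist n Y m = vdist n p m" unfolding vdist_def
      by (intro vnorm_cong) (simp add: u_def)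
    then show ?thesis by (simp add: p_def)
  next
    case False
    then have nupos: "nu > 0" using vnorm_nonneg[of n u] unfolding nu_def by linarith
    define x where "x = (\<lambda>i\<in>{..<n}. m i + (r / nu) * u i)"
    have xr: "x \<in> rvec n" by (simp add: x_def rvec_def)
    have "vdist n x m = vnorm n (\<lambda>i. (r / nu) * u i)"
      unfolding vdist_def by (intro vnorm_cong) (simp add: x_def)
    also have "\<dots> = r" using nupos r by (subst vnorm_scale) (simp add: nu_def[symmetric])
    finally have "x \<in> K" using xr ball by (auto simp: ncball_def)
    then have vi: "ip n u (\<lambda>i. x i - p i) \<le> 0"
      using var_ineq[OF K, of x Y] by (simp add: u_def p_def)
    have "ip n u (\<lambda>i. x i - p i) = ip n u (\<lambda>i. (m i - p i) + (r / nu) * u i)"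
      by (intro ip_cong) (auto simp: x_def)
    also have "\<dots> = ip n u (\<lambda>i. m i - p i) + (r / nu) * (vnorm n u)^2"
      by (rule ip_add_scale)
    also have "(r / nu) * (vnorm n u)^2 = r * nu"
      using nupos by (simp add: nu_def[symmetric] power2_eq_square)
    finally have "r * nu \<le> - ip n u (\<lambda>i. m i - p i)" using vi by simp
    also have "- ip n u (\<lambda>i. m i - p i) = ip n u (\<lambda>i. p i - m i)"
      by (simp add: ip_def sum_negf[symmetric] algebra_simps)
    also have "\<dots> \<le> nu * vdist n p m"
      using ip_cs[of n u] by (simp add: nu_def vdist_def)
    finally have "r \<le> vdist n p m" using nupos by (simp add: mult.commute)
    then show ?thesis by (simp add: p_def)
  qed
qed



abbreviation "NN \<sigma> \<equiv> density lborel (normal_density 0 \<sigma>)"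

lemma NN_ps: "\<sigma> > 0 \<Longrightarrow> prob_space (NN \<sigma>)"
  by (rule prob_space_normal_density)

lemma nmom:
  assumes "\<sigma> > 0"
  shows "integrable (NN \<sigma>) (\<lambda>x. x^(2*k))"
    "integral\<^sup>L (NN \<sigma>) (\<lambda>x. x^(2*k)) = fact (2 * k) / ((2 / \<sigma>\<^sup>2)^k * fact k)"
proof -
  have h: "has_bochner_integral lborel (\<lambda>x. normal_density 0 \<sigma> x * x ^ (2 * k)) (fact (2 * k) / ((2 / \<sigma>\<^sup>2)^k * fact k))"
    using normal_moment_even[where k=k and \<mu>=0 and \<sigma>=\<sigma>] assms by simp
  show "integrable (NN \<sigma>) (\<lambda>x. x^(2*k))"
    using h by (subst integrable_density) (auto simp: has_bochner_integral_iff)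
  show "integral\<^sup>L (NN \<sigma>) (\<lambda>x. x^(2*k)) = fact (2 * k) / ((2 / \<sigma>\<^sup>2)^k * fact k)"
    using h by (subst integral_density) (auto simp: has_bochner_integral_iff)
qed

lemma nmom2: "\<sigma> > 0 \<Longrightarrow> integrable (NN \<sigma>) (\<lambda>x. x^2) \<and> integral\<^sup>L (NN \<sigma>) (\<lambda>x. x^2) = \<sigma>^2"
  using nmom[of \<sigma> 1] by (simp add: fact_numeral)

lemma nmom4: "\<sigma> > 0 \<Longrightarrow> integrable (NN \<sigma>) (\<lambda>x. x^4) \<and> integral\<^sup>L (NN \<sigma>) (\<lambda>x. x^4) = 3 * \<sigma>^4"
  using nmom[of \<sigma> 2] by (simp add: fact_numeral power2_eq_square field_simps power4_eq_xxxx)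

lemma nmom0: "\<sigma> > 0 \<Longrightarrow> integrable (NN \<sigma>) (\<lambda>x. 1::real) \<and> integral\<^sup>L (NN \<sigma>) (\<lambda>x. 1::real) = 1"
  using prob_space.prob_space[OF NN_ps[of \<sigma>]] prob_space.finite_measure[OF NN_ps[of \<sigma>]]
  by (simp add: finite_measure.integrable_const)

lemma gauss_ps: "\<sigma> > 0 \<Longrightarrow> prob_space (gauss n \<sigma>)"
  unfolding gauss_def by (rule prob_space_PiM) (rule NN_ps)

lemma gauss_prod:
  assumes s: "\<sigma> > 0" and I: "finite I" and f: "\<And>l. l \<in> I \<Longrightarrow> integrable (NN \<sigma>) (f l)"
  shows "integrable (PiM I (\<lambda>_. NN \<sigma>)) (\<lambda>x. \<Prod>l\<in>I. f l (x l) :: real)"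
    "integral\<^sup>L (PiM I (\<lambda>_. NN \<sigma>)) (\<lambda>x. \<Prod>l\<in>I. f l (x l) :: real) = (\<Prod>l\<in>I. integral\<^sup>L (NN \<sigma>) (f l))"
proof -
  interpret ps: prob_space "NN \<sigma>" using NN_ps[OF s] .
  interpret product_sigma_finite "\<lambda>_. NN \<sigma>"
    by unfold_locales
  show "integrable (PiM I (\<lambda>_. NN \<sigma>)) (\<lambda>x. \<Prod>l\<in>I. f l (x l) :: real)"
    by (rule product_integrable_prod[OF I f])
  show "integral\<^sup>L (PiM I (\<lambda>_. NN \<sigma>)) (\<lambda>x. \<Prod>l\<in>I. f l (x l) :: real) = (\<Prod>l\<in>I. integral\<^sup>L (NN \<sigma>) (f l))"
    by (rule product_integral_prod[OF I f])
qed

lemma gauss_single: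
  fixes g :: "real \<Rightarrow> real"
  assumes s: "\<sigma> > 0" and i: "i < n" and g: "integrable (NN \<sigma>) g"
  shows "integrable (gauss n \<sigma>) (\<lambda>x. g (x i))"
    "integral\<^sup>L (gauss n \<sigma>) (\<lambda>x. g (x i)) = integral\<^sup>L (NN \<sigma>) g"
proof -
  define f where "f = (\<lambda>l. if l = i then g else (\<lambda>x. 1::real))"
  have fi: "\<And>l. l \<in> {..<n} \<Longrightarrow> integrable (NN \<sigma>) (f l)"
    using g nmom0[OF s] by (auto simp: f_def)
  have p: "(\<Prod>l\<in>{..<n}. f l (x l)) = g (x i)" for x
  proof -
    have "(\<Prod>l\<in>{..<n}. f l (x l)) = (\<Prod>l\<in>{..<n}. if l = i then g (x i) else 1)"
      by (intro prod.cong) (auto simp: f_def)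
    then show ?thesis using i by (simp add: prod.delta)
  qed
  have q: "(\<Prod>l\<in>{..<n}. integral\<^sup>L (NN \<sigma>) (f l)) = integral\<^sup>L (NN \<sigma>) g"
  proof -
    have "(\<Prod>l\<in>{..<n}. integral\<^sup>L (NN \<sigma>) (f l)) = (\<Prod>l\<in>{..<n}. if l = i then integral\<^sup>L (NN \<sigma>) g else 1)"
      using nmom0[OF s] by (intro prod.cong) (auto simp: f_def)
    then show ?thesis using i by (simp add: prod.delta)
  qed
  show "integrable (gauss n \<sigma>) (\<lambda>x. g (x i))"
    using gauss_prod(1)[of \<sigma> "{..<n}" f, OF s _ fi] by (simp add: p gauss_def)
  show "integral\<^sup>L (gauss n \<sigma>) (\<lambda>x. g (x i)) = integral\<^sup>L (NN \<sigma>) g"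
    using gauss_prod(2)[of \<sigma> "{..<n}" f, OF s _ fi] by (simp add: p q gauss_def)
qed

lemma gauss_pair:
  fixes g h :: "real \<Rightarrow> real"
  assumes s: "\<sigma> > 0" and i: "i < n" and j: "j < n" and ij: "i \<noteq> j"
    and g: "integrable (NN \<sigma>) g" and h: "integrable (NN \<sigma>) h"
  shows "integrable (gauss n \<sigma>) (\<lambda>x. g (x i) * h (x j))"
    "integral\<^sup>L (gauss n \<sigma>) (\<lambda>x. g (x i) * h (x j)) = integral\<^sup>L (NN \<sigma>) g * integral\<^sup>L (NN \<sigma>) h"
proof -
  define f where "f = (\<lambda>l. if l = i then g else if l = j then h else (\<lambda>x. 1::real))"
  have fi: "\<And>l. l \<in> {..<n} \<Longrightarrow> integrable (NN \<sigma>) (f l)"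
    using g h nmom0[OF s] by (auto simp: f_def)
  have pp: "\<And>A B :: real. (\<Prod>l\<in>{..<n}. if l = i then A else if l = j then B else 1) = A * B"
  proof -
    fix A B :: real
    have "(\<Prod>l\<in>{..<n}. if l = i then A else if l = j then B else 1)
        = (\<Prod>l\<in>{..<n}. (if l = i then A else 1) * (if l = j then B else 1))"
      using ij by (intro prod.cong) auto
    also have "\<dots> = A * B" using i j by (simp add: prod.distrib prod.delta)
    finally show "(\<Prod>l\<in>{..<n}. if l = i then A else if l = j then B else 1) = A * B" .
  qed
  have p: "(\<Prod>l\<in>{..<n}. f l (x l)) = g (x i) * h (x j)" for x
  proof -
    have "(\<Prod>l\<in>{..<n}. f l (x l)) = (\<Prod>l\<in>{..<n}. if l = i then g (x i) else if l = j then h (x j) else 1)"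
      by (intro prod.cong) (auto simp: f_def)
    also have "\<dots> = g (x i) * h (x j)"
      by (rule pp)
    finally show ?thesis .
  qed
  have q: "(\<Prod>l\<in>{..<n}. integral\<^sup>L (NN \<sigma>) (f l)) = integral\<^sup>L (NN \<sigma>) g * integral\<^sup>L (NN \<sigma>) h"
  proof -
    have "(\<Prod>l\<in>{..<n}. integral\<^sup>L (NN \<sigma>) (f l)) = (\<Prod>l\<in>{..<n}. if l = i then integral\<^sup>L (NN \<sigma>) g else if l = j then integral\<^sup>L (NN \<sigma>) h else 1)"
      using nmom0[OF s] by (intro prod.cong) (auto simp: f_def)
    also have "\<dots> = integral\<^sup>L (NN \<sigma>) g * integral\<^sup>L (NN \<sigma>) h"
      by (rule pp)
    finally show ?thesis .
  qed
  show "integrable (gauss n \<sigma>) (\<lambda>x. g (x i) * h (x j))"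
    using gauss_prod(1)[of \<sigma> "{..<n}" f, OF s _ fi] by (simp add: p gauss_def)
  show "integral\<^sup>L (gauss n \<sigma>) (\<lambda>x. g (x i) * h (x j)) = integral\<^sup>L (NN \<sigma>) g * integral\<^sup>L (NN \<sigma>) h"
    using gauss_prod(2)[of \<sigma> "{..<n}" f, OF s _ fi] by (simp add: p q gauss_def)
qed



lemma pair_mom:
  assumes s: "\<sigma> > 0" and i: "i < n" and j: "j < n"
  shows "integrable (gauss n \<sigma>) (\<lambda>x. (x i)^2 * (x j)^2)"
    "integral\<^sup>L (gauss n \<sigma>) (\<lambda>x. (x i)^2 * (x j)^2) \<le> 3 * \<sigma>^4"
proof -
  have "integrable (gauss n \<sigma>) (\<lambda>x. (x i)^2 * (x j)^2) \<and> integral\<^sup>L (gauss n \<sigma>) (\<lambda>x. (x i)^2 * (x j)^2) \<le> 3 * \<sigma>^4"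
  proof (cases "i = j")
    case True
    have e: "(\<lambda>x::nat\<Rightarrow>real. (x i)^2 * (x j)^2) = (\<lambda>x. (\<lambda>y. y^4) (x i))"
      proof -
      have sq4: "\<And>y::real. y^2 * y^2 = y^4" by (simp add: power2_eq_square power4_eq_xxxx)
      show ?thesis unfolding True by (intro ext) (rule sq4)
    qed
    show ?thesis unfolding e using gauss_single[OF s i, of "\<lambda>y. y^4"] nmom4[OF s] by simp
  next
    case False
    have "0 \<le> \<sigma>^4" by simp
    then show ?thesis
      using gauss_pair[OF s i j False, of "\<lambda>y. y^2" "\<lambda>y. y^2"] nmom2[OF s]
      by (simp add: power2_eq_square power4_eq_xxxx)
  qed
  then show "integrable (gauss n \<sigma>) (\<lambda>x. (x i)^2 * (x j)^2)"
    "integral\<^sup>L (gauss n \<sigma>) (\<lambda>x. (x i)^2 * (x j)^2) \<le> 3 * \<sigma>^4" by auto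
qed

definition XX :: "nat \<Rightarrow> (nat \<Rightarrow> real) \<Rightarrow> real" where
  "XX n x = (\<Sum>i<n. (x i)^2)"

lemma XX_mom1:
  assumes s: "\<sigma> > 0"
  shows "integrable (gauss n \<sigma>) (XX n)" "integral\<^sup>L (gauss n \<sigma>) (XX n) = n * \<sigma>^2"
proof -
  have int: "\<And>i. i \<in> {..<n} \<Longrightarrow> integrable (gauss n \<sigma>) (\<lambda>x. (x i)^2)"
    using gauss_single(1)[OF s, of _ n "\<lambda>y. y^2"] nmom2[OF s] by auto
  have eq: "\<And>i. i \<in> {..<n} \<Longrightarrow> integral\<^sup>L (gauss n \<sigma>) (\<lambda>x. (x i)^2) = \<sigma>^2"
    using gauss_single(2)[OF s, of _ n "\<lambda>y. y^2"] nmom2[OF s] by auto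
  show "integrable (gauss n \<sigma>) (XX n)"
    unfolding XX_def using int by (auto intro!: integrable_sum)
  have "integral\<^sup>L (gauss n \<sigma>) (XX n) = (\<Sum>i<n. integral\<^sup>L (gauss n \<sigma>) (\<lambda>x. (x i)^2))"
    unfolding XX_def using int by (auto intro!: integral_sum)
  also have "\<dots> = n * \<sigma>^2" using eq by simp
  finally show "integral\<^sup>L (gauss n \<sigma>) (XX n) = n * \<sigma>^2" .
qed

lemma XX_mom2:
  assumes s: "\<sigma> > 0"
  shows "integrable (gauss n \<sigma>) (\<lambda>x. (XX n x)^2)" "integral\<^sup>L (gauss n \<sigma>) (\<lambda>x. (XX n x)^2) \<le> 3 * (n * \<sigma>^2)^2"
proof -
  have e: "(\<lambda>x. (XX n x)^2) = (\<lambda>x. \<Sum>i<n. \<Sum>j<n. (x i)^2 * (x j)^2)"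
    by (simp add: fun_eq_iff XX_def power2_eq_square sum_product)
  have int: "\<And>i. i \<in> {..<n} \<Longrightarrow> integrable (gauss n \<sigma>) (\<lambda>x. \<Sum>j<n. (x i)^2 * (x j)^2)"
    using pair_mom(1)[OF s] by (auto intro!: integrable_sum)
  show "integrable (gauss n \<sigma>) (\<lambda>x. (XX n x)^2)"
    unfolding e using int by (auto intro!: integrable_sum)
  have "integral\<^sup>L (gauss n \<sigma>) (\<lambda>x. (XX n x)^2) = (\<Sum>i<n. \<Sum>j<n. integral\<^sup>L (gauss n \<sigma>) (\<lambda>x. (x i)^2 * (x j)^2))"
    unfolding e using int pair_mom(1)[OF s]
    by (simp add: integral_sum)
  also have "\<dots> \<le> (\<Sum>i<n. \<Sum>j<n. 3 * \<sigma>^4)"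
    using pair_mom(2)[OF s] by (intro sum_mono) auto
  also have "\<dots> = 3 * (n * \<sigma>^2)^2" by (simp add: power2_eq_square power4_eq_xxxx)
  finally show "integral\<^sup>L (gauss n \<sigma>) (\<lambda>x. (XX n x)^2) \<le> 3 * (n * \<sigma>^2)^2" .
qed



lemma K_bounded: "convex_body n K \<Longrightarrow> \<exists>R. \<forall>x\<in>K. vnorm n x \<le> R"
  by (simp add: convex_body_def)

lemma vdist_le_norms: "vdist n x y \<le> vnorm n x + vnorm n y"
proof -
  have "vdist n x y = vnorm n (\<lambda>i. x i + (-1) * y i)" by (simp add: vdist_def)
  also have "\<dots> \<le> vnorm n x + vnorm n (\<lambda>i. (-1) * y i)" by (rule vnorm_triangle)
  also have "vnorm n (\<lambda>i. (-1) * y i) = vnorm n y" by (subst vnorm_scale) simp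
  finally show ?thesis .
qed

lemma proj_lip1:
  assumes K: "convex_body n K" and SC: "strongly_convex n k K" and k: "k \<ge> 0"
  shows "vdist n (lse n K Y) (lse n K Y') \<le> vdist n Y Y'"
proof -
  have "vdist n (lse n K Y) (lse n K Y') * 1 \<le> vdist n (lse n K Y) (lse n K Y') * (1 + (k/2) * (vdist n Y (lse n K Y) + vdist n Y' (lse n K Y')))"
    using k by (intro mult_left_mono) auto
  then show ?thesis using proj_lip[OF K SC k, of Y Y'] by simp
qed

lemma vadd_vdist: "vdist n (vadd n \<mu> x) (vadd n \<mu> y) = vnorm n (\<lambda>i. x i - y i)"
  unfolding vdist_def by (intro vnorm_cong) (simp add: vadd_def)

lemma integrand_integrable:
  assumes K: "convex_body n K" and SC: "strongly_convex n k K" and k: "k \<ge> 0"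
    and \<mu>: "\<mu> \<in> K" and s: "\<sigma> > 0"
  shows "integrable (gauss n \<sigma>) (\<lambda>\<xi>. (vdist n (lse n K (vadd n \<mu> \<xi>)) \<mu>)^2)"
proof -
  interpret ps: prob_space "gauss n \<sigma>" using gauss_ps[OF s] .
  obtain R where R: "\<And>x. x \<in> K \<Longrightarrow> vnorm n x \<le> R" using K_bounded[OF K] by blast
  define e where "e = (\<lambda>y. vdist n (lse n K (vadd n \<mu> y)) \<mu>)"
  define g where "g = (\<lambda>y. (e y)^2)"
  have e0: "0 \<le> e y" for y by (simp add: e_def)
  have eR: "e y \<le> 2 * R" for y
  proof -
    have "e y \<le> vnorm n (lse n K (vadd n \<mu> y)) + vnorm n \<mu>" unfolding e_def by (rule vdist_le_norms)
    also have "\<dots> \<le> R + R" using R[OF \<mu>] R[OF lse_prop(1)[OF K]] by (intro add_mono) auto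
    finally show ?thesis by simp
  qed
  have R0: "0 \<le> R" using R[OF \<mu>] vnorm_nonneg[of n \<mu>] by linarith
  have lipg: "\<bar>g y - g y0\<bar> \<le> 4 * R * (\<Sum>i<n. \<bar>y i - y0 i\<bar>)" for y y0
  proof -
    have "\<bar>e y - e y0\<bar> \<le> vdist n (lse n K (vadd n \<mu> y)) (lse n K (vadd n \<mu> y0))"
      unfolding e_def using vdist_triangle[of n "lse n K (vadd n \<mu> y)" \<mu> "lse n K (vadd n \<mu> y0)"]
        vdist_triangle[of n "lse n K (vadd n \<mu> y0)" \<mu> "lse n K (vadd n \<mu> y)"]
        vdist_sym[of n _ \<mu>] vdist_sym[of n "lse n K (vadd n \<mu> y)" "lse n K (vadd n \<mu> y0)"]
      by (auto simp: abs_le_iff)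
    also have "\<dots> \<le> vdist n (vadd n \<mu> y) (vadd n \<mu> y0)" by (rule proj_lip1[OF K SC k])
    also have "\<dots> \<le> (\<Sum>i<n. \<bar>y i - y0 i\<bar>)" unfolding vadd_vdist by (rule vnorm_le_sum_abs)
    finally have a: "\<bar>e y - e y0\<bar> \<le> (\<Sum>i<n. \<bar>y i - y0 i\<bar>)" .
    have "\<bar>g y - g y0\<bar> = \<bar>e y - e y0\<bar> * (e y + e y0)"
    proof -
      have "g y - g y0 = (e y - e y0) * (e y + e y0)"
        unfolding g_def by (simp add: power2_eq_square algebra_simps)
      then show ?thesis using e0[of y] e0[of y0] by (simp add: abs_mult)
    qed
    also have "\<dots> \<le> (\<Sum>i<n. \<bar>y i - y0 i\<bar>) * (4 * R)"
      using a eR[of y] eR[of y0] e0[of y] e0[of y0] by (intro mult_mono) auto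
    finally show ?thesis by (simp add: mult.commute)
  qed
  have cont: "continuous_on UNIV g"
  proof (rule continuous_at_imp_continuous_on, intro ballI)
    fix y0 :: "nat \<Rightarrow> real"
    define S where "S = (\<lambda>y::nat \<Rightarrow> real. 4 * R * (\<Sum>i<n. \<bar>y i - y0 i\<bar>))"
    have "continuous_on UNIV S"
      unfolding S_def by (intro continuous_intros continuous_on_product_coordinates)
    then have "isCont S y0" by (simp add: continuous_on_eq_continuous_at)
    then have "(S \<longlongrightarrow> 0) (at y0)" by (simp add: isCont_def S_def)
    then have "((\<lambda>y. g y - g y0) \<longlongrightarrow> 0) (at y0)"
      by (rule Lim_null_comparison[rotated]) (auto simp: S_def lipg intro!: always_eventually)
    then show "isCont g y0" by (simp add: isCont_def LIM_zero_iff)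
  qed
  define ext where "ext = (\<lambda>\<xi>::nat \<Rightarrow> real. \<lambda>i. if i < n then \<xi> i else 0)"
  have "ext \<in> borel_measurable (gauss n \<sigma>)"
    unfolding ext_def
  proof (rule measurable_coordinatewise_then_product)
    fix i
    show "(\<lambda>x. if i < n then x i else 0) \<in> borel_measurable (gauss n \<sigma>)"
    proof (cases "i < n")
      case True
      have m: "(\<lambda>x. x i) \<in> measurable (gauss n \<sigma>) (NN \<sigma>)"
        unfolding gauss_def using True by (intro measurable_component_singleton) auto
      have ss: "sets (NN \<sigma>) = sets borel" by simp
      have "(\<lambda>x. x i) \<in> borel_measurable (gauss n \<sigma>)"
        using m unfolding measurable_cong_sets[OF refl ss] .
      then show ?thesis using True by simp
    qed simp
  qed
  moreover have "g \<in> borel_measurable borel" by (rule borel_measurable_continuous_onI[OF cont])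
  ultimately have "(g \<circ> ext) \<in> borel_measurable (gauss n \<sigma>)" by (rule measurable_comp)
  moreover have "g \<circ> ext = (\<lambda>\<xi>. (vdist n (lse n K (vadd n \<mu> \<xi>)) \<mu>)^2)"
  proof -
    have va: "vadd n \<mu> (ext \<xi>) = vadd n \<mu> \<xi>" for \<xi> by (auto simp: vadd_def ext_def)
    show ?thesis by (intro ext) (simp only: comp_def g_def e_def va)
  qed
  ultimately have meas: "(\<lambda>\<xi>. (vdist n (lse n K (vadd n \<mu> \<xi>)) \<mu>)^2) \<in> borel_measurable (gauss n \<sigma>)" by simp
  show ?thesis
  proof (rule ps.integrable_const_bound[OF _ meas])
    show "AE x in gauss n \<sigma>. norm ((vdist n (lse n K (vadd n \<mu> x)) \<mu>)^2) \<le> (2 * R)^2"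
    proof (intro always_eventually allI)
      fix x
      have "(e x)^2 \<le> (2 * R)^2" using eR[of x] e0[of x] by (intro power_mono) auto
      then show "norm ((vdist n (lse n K (vadd n \<mu> x)) \<mu>)^2) \<le> (2 * R)^2"
        by (simp add: e_def)
    qed
  qed
qed



lemma diam_bdd: "convex_body n K \<Longrightarrow> bdd_above {vdist n \<mu> \<nu> | \<mu> \<nu>. \<mu> \<in> K \<and> \<nu> \<in> K}"
proof -
  assume K: "convex_body n K"
  obtain R where R: "\<And>x. x \<in> K \<Longrightarrow> vnorm n x \<le> R" using K_bounded[OF K] by blast
  show ?thesis
  proof (rule bdd_aboveI[of _ "2 * R"], clarify)
    fix \<mu> \<nu> assume "\<mu> \<in> K" "\<nu> \<in> K"
    then show "vdist n \<mu> \<nu> \<le> 2 * R" using vdist_le_norms[of n \<mu> \<nu>] R[of \<mu>] R[of \<nu>] by linarith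
  qed
qed

lemma diam_ub: "convex_body n K \<Longrightarrow> x \<in> K \<Longrightarrow> y \<in> K \<Longrightarrow> vdist n x y \<le> diam n K"
  unfolding diam_def by (rule cSup_upper[OF _ diam_bdd]) auto

lemma e0_vec:
  fixes m :: "nat \<Rightarrow> real"
  assumes n: "n \<ge> 1"
  defines "pp t \<equiv> (\<lambda>i\<in>{..<n}. m i + (if i = 0 then t else 0))"
  shows "pp t \<in> rvec n" "vdist n (pp t) m = \<bar>t\<bar>" "vdist n (pp t) (pp s) = \<bar>t - s\<bar>"
proof -
  show "pp t \<in> rvec n" by (simp add: pp_def rvec_def)
  have z: "0 \<in> {..<n}" using n by auto
  have "(vdist n (pp t) m)^2 = (\<Sum>i<n. (if i = 0 then t else 0)^2)"
    unfolding vdist_sq by (intro sum.cong) (auto simp: pp_def)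
  also have "\<dots> = (\<Sum>i<n. if i = 0 then t^2 else 0)" by (intro sum.cong) auto
  also have "\<dots> = t^2" using z by (simp add: sum.delta)
  finally show "vdist n (pp t) m = \<bar>t\<bar>"
    by (metis real_sqrt_abs real_sqrt_unique vdist_nonneg)
  have "(vdist n (pp t) (pp s))^2 = (\<Sum>i<n. (if i = 0 then t - s else 0)^2)"
    unfolding vdist_sq by (intro sum.cong) (auto simp: pp_def)
  also have "\<dots> = (\<Sum>i<n. if i = 0 then (t - s)^2 else 0)" by (intro sum.cong) auto
  also have "\<dots> = (t - s)^2" using z by (simp add: sum.delta)
  finally show "vdist n (pp t) (pp s) = \<bar>t - s\<bar>"
    by (metis real_sqrt_abs real_sqrt_unique vdist_nonneg)
qed

lemma ball_diam:
  assumes K: "convex_body n K" and n: "n \<ge> 1" and r: "0 \<le> r" and B: "ncball n m r \<subseteq> K"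
  shows "2 * r \<le> diam n K"
proof -
  define pp where "pp t = (\<lambda>i\<in>{..<n}. m i + (if i = 0 then t else 0))" for t
  have "pp r \<in> K" "pp (-r) \<in> K"
    using e0_vec[OF n, of m] B r by (auto simp: ncball_def pp_def)
  then have "vdist n (pp r) (pp (-r)) \<le> diam n K" by (rule diam_ub[OF K])
  moreover have "vdist n (pp r) (pp (-r)) = 2 * r" using e0_vec(3)[OF n, of m r "-r"] r by (simp add: pp_def)
  ultimately show ?thesis by simp
qed

lemma diam_pos: assumes K: "convex_body n K" and n: "n \<ge> 1" shows "0 < diam n K"
proof -
  obtain x r where "x \<in> K" "r > 0" "ncball n x r \<subseteq> K" using K by (auto simp: convex_body_def)
  then show ?thesis using ball_diam[OF K n, of r x] by simp
qed

lemma diam_near: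
  assumes K: "convex_body n K" and n: "n \<ge> 1"
  shows "\<exists>a\<in>K. \<exists>b\<in>K. diam n K / 2 < vdist n a b"
proof -
  have ne: "{vdist n \<mu> \<nu> | \<mu> \<nu>. \<mu> \<in> K \<and> \<nu> \<in> K} \<noteq> {}" using cb_ne[OF K] by blast
  have "diam n K / 2 < diam n K" using diam_pos[OF K n] by simp
  then have "diam n K / 2 < Sup {vdist n \<mu> \<nu> | \<mu> \<nu>. \<mu> \<in> K \<and> \<nu> \<in> K}" by (simp add: diam_def)
  then show ?thesis using less_cSup_iff[OF ne diam_bdd[OF K]] by blast
qed



lemma min_poly:
  fixes X R s :: real
  assumes X: "0 \<le> X" and R: "0 < R" and s: "0 < s" "s \<le> 1"
  shows "s * X + (-(s^2/(4*R))) * X^2 + 0 \<le> min X R"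
proof -
  define t where "t = s * X"
  have t0: "0 \<le> t" "t \<le> X" using X s by (auto simp: t_def mult_left_le_one_le)
  have q: "s * X + (-(s^2/(4*R))) * X^2 + 0 = t - t^2 / (4 * R)"
    by (simp add: t_def power_mult_distrib)
  have a: "t - t^2 / (4 * R) \<le> t" using R by simp
  have "4 * R * t - t^2 \<le> 4 * R * R"
    using zero_le_power2[of "t - 2 * R"] by (simp add: power2_eq_square algebra_simps)
  then have "(4 * R * t - t^2) / (4 * R) \<le> R" using R by (simp add: divide_le_eq mult.commute)
  then have b: "t - t^2 / (4 * R) \<le> R" using R by (simp add: diff_divide_distrib)
  show ?thesis unfolding q using a b t0 by linarith
qed

lemma caseB_pt:
  fixes X V L E :: real
  assumes X: "0 \<le> X" and V: "0 < V" and L: "0 \<le> L" and E: "0 \<le> E"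
    and big: "X \<ge> V / 4 \<Longrightarrow> L \<le> E"
  shows "(4 * L / (7 * V)) * X + (-((4 * L / (7 * V)) / (8 * V))) * X^2 + (-((4 * L / (7 * V)) * V / 4)) \<le> E"
proof -
  define C where "C = 4 * L / (7 * V)"
  have C0: "0 \<le> C" using L V by (simp add: C_def)
  have eq: "C * X + (-(C / (8 * V))) * X^2 + (-(C * V / 4)) = C * (X - X^2 / (8 * V) - V / 4)"
    by (simp add: algebra_simps)
  show ?thesis
  proof (cases "X \<ge> V / 4")
    case True
    have "8 * V * X - X^2 \<le> 16 * V * V"
      using zero_le_power2[of "X - 4 * V"] by (simp add: power2_eq_square algebra_simps)
    then have "(8 * V * X - X^2) / (8 * V) \<le> 2 * V" using V by (simp add: divide_le_eq)
    then have "X - X^2 / (8 * V) \<le> 2 * V" using V by (simp add: diff_divide_distrib)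
    then have "C * (X - X^2 / (8 * V) - V / 4) \<le> C * (7 * V / 4)"
      using C0 by (intro mult_left_mono) auto
    also have "C * (7 * V / 4) = L" using V by (simp add: C_def)
    finally show ?thesis using big[OF True] eq unfolding C_def[symmetric] by linarith
  next
    case False
    have "0 \<le> X^2 / (8 * V)" using V by simp
    then have "X - X^2 / (8 * V) - V / 4 \<le> 0" using False by linarith
    then have "C * (X - X^2 / (8 * V) - V / 4) \<le> 0" using C0 by (simp add: mult_nonneg_nonpos)
    then show ?thesis using E eq unfolding C_def[symmetric] by linarith
  qed
qed

lemma lin_int:
  fixes f g :: "'a \<Rightarrow> real"
  assumes "integrable M f" "integrable M g" "prob_space M"
  shows "integrable M (\<lambda>x. a * f x + b * g x + c)"
    "integral\<^sup>L M (\<lambda>x. a * f x + b * g x + c) = a * integral\<^sup>L M f + b * integral\<^sup>L M g + c"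
proof -
  interpret prob_space M by fact
  have i1: "integrable M (\<lambda>x. a * f x)" using assms(1) by (rule integrable_mult_right)
  have i2: "integrable M (\<lambda>x. b * g x)" using assms(2) by (rule integrable_mult_right)
  have i3: "integrable M (\<lambda>x. a * f x + b * g x)" using i1 i2 by (rule Bochner_Integration.integrable_add)
  show "integrable M (\<lambda>x. a * f x + b * g x + c)" by (rule Bochner_Integration.integrable_add[OF i3]) simp
  have "integral\<^sup>L M (\<lambda>x. a * f x + b * g x + c) = integral\<^sup>L M (\<lambda>x. a * f x + b * g x) + integral\<^sup>L M (\<lambda>x. c)"
    by (rule Bochner_Integration.integral_add[OF i3]) simp
  also have "integral\<^sup>L M (\<lambda>x. a * f x + b * g x) = integral\<^sup>L M (\<lambda>x. a * f x) + integral\<^sup>L M (\<lambda>x. b * g x)"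
    using i1 i2 by (rule Bochner_Integration.integral_add)
  also have "integral\<^sup>L M (\<lambda>x. c) = c" using prob_space by simp
  finally show "integral\<^sup>L M (\<lambda>x. a * f x + b * g x + c) = a * integral\<^sup>L M f + b * integral\<^sup>L M g + c"
    using assms(1,2) by simp
qed

lemma XX_vnorm: "XX n \<xi> = (vnorm n \<xi>)^2"
  by (simp add: XX_def vnorm_sq)

lemma vadd_dist: "vdist n (vadd n \<mu> \<xi>) \<mu> = vnorm n \<xi>"
  unfolding vdist_def by (intro vnorm_cong) (simp add: vadd_def)

lemma vadd_dist2: "vdist n (vadd n a \<xi>) (vadd n b \<xi>) = vdist n a b"
  unfolding vdist_def by (intro vnorm_cong) (simp add: vadd_def)



lemma caseB_big:
  assumes K: "convex_body n K" and SC: "strongly_convex n k K" and k: "k > 0" and c1: "c1 > 0"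
    and a: "a \<in> K" and b: "b \<in> K" and dd: "diam n K \<le> D / 4" and lo: "c1 \<le> k * D"
    and xi: "D / 2 \<le> vnorm n \<xi>"
  shows "(c1 / (4 + c1) * vdist n a b)^2 / 2 \<le>
     (vdist n (lse n K (vadd n a \<xi>)) a)^2 + (vdist n (lse n K (vadd n b \<xi>)) b)^2"
proof -
  define p where "p = lse n K (vadd n a \<xi>)"
  define q where "q = lse n K (vadd n b \<xi>)"
  have pK: "p \<in> K" and qK: "q \<in> K" using lse_prop(1)[OF K] by (auto simp: p_def q_def)
  define d where "d = diam n K"
  define d0 where "d0 = vdist n a b"
  define ea where "ea = vdist n p a"
  define eb where "eb = vdist n q b"
  define A where "A = vdist n (vadd n a \<xi>) p"
  define B where "B = vdist n (vadd n b \<xi>) q"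
  define pq where "pq = vdist n p q"
  have ea: "ea \<le> d" using diam_ub[OF K pK a] by (simp add: ea_def d_def)
  have eb: "eb \<le> d" using diam_ub[OF K qK b] by (simp add: eb_def d_def)
  have "vnorm n \<xi> \<le> A + ea"
    using vdist_triangle[of n "vadd n a \<xi>" a p] by (simp add: vadd_dist A_def ea_def)
  then have A: "D / 4 \<le> A" using xi ea dd by (simp add: d_def)
  have "vnorm n \<xi> \<le> B + eb"
    using vdist_triangle[of n "vadd n b \<xi>" b q] by (simp add: vadd_dist B_def eb_def)
  then have B: "D / 4 \<le> B" using xi eb dd by (simp add: d_def)
  have lip: "pq * (1 + (k/2) * (A + B)) \<le> d0"
    using proj_lip[OF K SC, of "vadd n a \<xi>" "vadd n b \<xi>"] k
    by (simp add: vadd_dist2 pq_def A_def B_def p_def q_def d0_def)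
  have "k * D / 4 \<le> (k/2) * (A + B)"
  proof -
    have "D / 2 \<le> A + B" using A B by simp
    then have "(k/2) * (D/2) \<le> (k/2) * (A + B)" using k by (intro mult_left_mono) auto
    then show ?thesis by simp
  qed
  then have "c1 / 4 \<le> (k/2) * (A + B)" using lo by linarith
  then have f: "1 + c1 / 4 \<le> 1 + (k/2) * (A + B)" by linarith
  have pq0: "0 \<le> pq" by (simp add: pq_def)
  have "pq * (1 + c1 / 4) \<le> pq * (1 + (k/2) * (A + B))" using f pq0 by (rule mult_left_mono)
  then have lip2: "pq * (1 + c1 / 4) \<le> d0" using lip by simp
  have tri: "d0 \<le> ea + pq + eb"
  proof -
    have "d0 \<le> vdist n a p + vdist n p b" unfolding d0_def by (rule vdist_triangle)
    also have "vdist n p b \<le> vdist n p q + vdist n q b" by (rule vdist_triangle)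
    finally show ?thesis by (simp add: ea_def eb_def pq_def vdist_sym)
  qed
  have "(d0 - pq) * (1 + c1 / 4) \<le> (ea + eb) * (1 + c1 / 4)"
    using tri c1 by (intro mult_right_mono) auto
  moreover have "(d0 - pq) * (1 + c1 / 4) \<ge> d0 * (c1 / 4)"
  proof -
    have e: "(d0 - pq) * (1 + c1 / 4) = d0 * (c1 / 4) + (d0 - pq * (1 + c1 / 4))"
      by (simp add: field_simps)
    show ?thesis unfolding e using lip2 by linarith
  qed
  ultimately have "d0 * (c1 / 4) \<le> (ea + eb) * (1 + c1 / 4)" by linarith
  moreover have "(ea + eb) * (1 + c1 / 4) = ((ea + eb) * (4 + c1)) / 4" by (simp add: field_simps)
  moreover have "d0 * (c1 / 4) = (d0 * c1) / 4" by simp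
  ultimately have h4: "d0 * c1 \<le> (ea + eb) * (4 + c1)" by simp
  have "c1 / (4 + c1) * d0 = d0 * c1 / (4 + c1)" by simp
  also have "\<dots> \<le> ea + eb" using h4 c1 by (simp add: pos_divide_le_eq mult.commute)
  finally have s: "c1 / (4 + c1) * d0 \<le> ea + eb" .
  have s0: "0 \<le> c1 / (4 + c1) * d0" using c1 by (simp add: d0_def)
  have "(c1 / (4 + c1) * d0)^2 \<le> (ea + eb)^2" using s s0 by (intro power_mono) auto
  also have "(ea + eb)^2 \<le> 2 * (ea^2 + eb^2)"
    using zero_le_power2[of "ea - eb"] by (simp add: power2_eq_square algebra_simps)
  finally show ?thesis by (simp add: ea_def eb_def p_def q_def d0_def)
qed



lemma risk_int:
  assumes K: "convex_body n K" and SC: "strongly_convex n k K" and k: "k > 0" and \<mu>: "\<mu> \<in> K" and s: "\<sigma> > 0"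
  shows "integrable (gauss n \<sigma>) (\<lambda>\<xi>. (vdist n (lse n K (vadd n \<mu> \<xi>)) \<mu>)^2)"
  using integrand_integrable[OF K SC _ \<mu> s] k by simp

lemma main_bound:
  assumes n: "n \<ge> 1" and K: "convex_body n K" and k: "k > 0" and SC: "strongly_convex n k K"
    and c1: "c1 > 0" and s: "\<sigma> > 0" and lo: "c1 \<le> k * (\<sigma> * sqrt n)"
  shows "\<exists>\<mu>\<in>K. (min (c1 / (4 + c1) / 10) (c1 / 200))^2 * (diam n K)^2 \<le> risk n K \<sigma> \<mu>"
proof -
  define c where "c = min (c1 / (4 + c1) / 10) (c1 / 200)"
  have c0: "0 < c" using c1 by (simp add: c_def)
  define D where "D = \<sigma> * sqrt n"
  define V where "V = n * \<sigma>^2"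
  have DV: "V = D^2" by (simp add: D_def V_def power_mult_distrib)
  have D0: "0 < D" using s n by (simp add: D_def)
  have V0: "0 < V" using D0 DV by simp
  have lo': "c1 \<le> k * D" using lo by (simp add: D_def)
  define d where "d = diam n K"
  have d0pos: "0 < d" using diam_pos[OF K n] by (simp add: d_def)
  obtain a b where a: "a \<in> K" and b: "b \<in> K" and ab: "d / 2 < vdist n a b"
    using diam_near[OF K n] by (auto simp: d_def)
  define d0 where "d0 = vdist n a b"
  have d0d: "d0 \<le> d" using diam_ub[OF K a b] by (simp add: d0_def d_def)
  have dd0: "d < 2 * d0" using ab by (simp add: d0_def)
  have d0pos': "0 < d0" using dd0 d0pos by simp
  interpret ps: prob_space "gauss n \<sigma>" using gauss_ps[OF s] .
  have EX: "integrable (gauss n \<sigma>) (XX n)" "integral\<^sup>L (gauss n \<sigma>) (XX n) = V"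
    using XX_mom1[OF s, of n] by (auto simp: V_def)
  have EX2: "integrable (gauss n \<sigma>) (\<lambda>x. (XX n x)^2)" "integral\<^sup>L (gauss n \<sigma>) (\<lambda>x. (XX n x)^2) \<le> 3 * V^2"
    using XX_mom2[OF s, of n] by (auto simp: V_def)
  have XX0: "0 \<le> XX n x" for x by (simp add: XX_def sum_nonneg)
  define bb where "bb = c1 / (4 + c1)"
  have cd: "c^2 * d^2 \<le> bb^2 * d0^2 / 25 \<and> c^2 * d^2 \<le> c1^2 * d0^2 / 10000"
  proof -
    have cc: "c \<le> bb / 10" "c \<le> c1 / 200" unfolding c_def bb_def
      by (rule min.cobounded1, rule min.cobounded2)
    have "c * d \<le> (bb / 10) * (2 * d0)"
      using cc c0 d0pos dd0 by (intro mult_mono) auto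
    then have "(c * d)^2 \<le> ((bb / 10) * (2 * d0))^2"
      using c0 d0pos by (intro power_mono) auto
    moreover have "((bb / 10) * (2 * d0))^2 = bb^2 * d0^2 / 25"
      by (simp add: power2_eq_square)
    moreover have "c * d \<le> (c1 / 200) * (2 * d0)"
      using cc c0 d0pos dd0 by (intro mult_mono) auto
    then have "(c * d)^2 \<le> ((c1 / 200) * (2 * d0))^2"
      using c0 d0pos by (intro power_mono) auto
    moreover have "((c1 / 200) * (2 * d0))^2 = c1^2 * d0^2 / 10000"
      by (simp add: power2_eq_square)
    ultimately show ?thesis by (simp add: power_mult_distrib)
  qed
  show ?thesis
  proof (cases "d \<le> D / 4")
    case True
    define \<beta> where "\<beta> = c1 / (4 + c1)"
    define L where "L = (\<beta> * d0)^2 / 2"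
    define Cst where "Cst = 4 * L / (7 * V)"
    define fa where "fa = (\<lambda>\<xi>. (vdist n (lse n K (vadd n a \<xi>)) a)^2)"
    define fb where "fb = (\<lambda>\<xi>. (vdist n (lse n K (vadd n b \<xi>)) b)^2)"
    have ia: "integrable (gauss n \<sigma>) fa" unfolding fa_def by (rule risk_int[OF K SC k a s])
    have ib: "integrable (gauss n \<sigma>) fb" unfolding fb_def by (rule risk_int[OF K SC k b s])
    have L0: "0 \<le> L" by (simp add: L_def)
    have pt: "Cst * XX n \<xi> + (-(Cst / (8 * V))) * (XX n \<xi>)^2 + (-(Cst * V / 4)) \<le> fa \<xi> + fb \<xi>" for \<xi>
      unfolding Cst_def
    proof (rule caseB_pt[OF XX0 V0 L0])
      show "0 \<le> fa \<xi> + fb \<xi>" by (simp add: fa_def fb_def)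
      assume big: "V / 4 \<le> XX n \<xi>"
      have "(D / 2)^2 \<le> (vnorm n \<xi>)^2" using big by (simp add: XX_vnorm DV power_divide)
      then have xi: "D / 2 \<le> vnorm n \<xi>" by (rule power2_le_imp_le) simp
      show "L \<le> fa \<xi> + fb \<xi>"
        using caseB_big[OF K SC k c1 a b _ lo' xi] True
        by (simp add: L_def \<beta>_def d0_def fa_def fb_def d_def)
    qed
    have ipoly: "integrable (gauss n \<sigma>) (\<lambda>x. Cst * XX n x + (-(Cst / (8 * V))) * (XX n x)^2 + (-(Cst * V / 4)))"
      by (rule lin_int(1)[OF EX(1) EX2(1) ps.prob_space_axioms])
    have "integral\<^sup>L (gauss n \<sigma>) (\<lambda>x. Cst * XX n x + (-(Cst / (8 * V))) * (XX n x)^2 + (-(Cst * V / 4)))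
        \<le> integral\<^sup>L (gauss n \<sigma>) (\<lambda>x. fa x + fb x)"
      using ipoly ia ib pt by (intro integral_mono) auto
    also have "\<dots> = risk n K \<sigma> a + risk n K \<sigma> b"
      using ia ib by (simp add: risk_def fa_def fb_def)
    finally have r1: "Cst * V + (-(Cst / (8 * V))) * integral\<^sup>L (gauss n \<sigma>) (\<lambda>x. (XX n x)^2) + (-(Cst * V / 4))
        \<le> risk n K \<sigma> a + risk n K \<sigma> b"
      using lin_int(2)[OF EX(1) EX2(1) ps.prob_space_axioms, of Cst "-(Cst / (8 * V))" "-(Cst * V / 4)"] EX(2)
      by simp
    have Cst0: "0 \<le> Cst" using L0 V0 by (simp add: Cst_def)
    have "(Cst / (8 * V)) * integral\<^sup>L (gauss n \<sigma>) (\<lambda>x. (XX n x)^2) \<le> (Cst / (8 * V)) * (3 * V^2)"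
      using EX2(2) Cst0 V0 by (intro mult_left_mono) auto
    also have "\<dots> = 3 * Cst * V / 8" using V0 by (simp add: power2_eq_square)
    finally have "Cst * V - 3 * Cst * V / 8 - Cst * V / 4 \<le> risk n K \<sigma> a + risk n K \<sigma> b"
      using r1 by linarith
    moreover have "Cst * V - 3 * Cst * V / 8 - Cst * V / 4 = 3 * L / 14"
      using V0 by (simp add: Cst_def field_simps)
    ultimately have sum: "3 * L / 14 \<le> risk n K \<sigma> a + risk n K \<sigma> b" by simp
    have "c^2 * d^2 \<le> 3 * L / 28"
    proof -
      have "c^2 * d^2 \<le> \<beta>^2 * d0^2 / 25" using cd by (simp add: \<beta>_def bb_def)
      also have "\<dots> \<le> 3 * L / 28" by (simp add: L_def power_mult_distrib)
      finally show ?thesis .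
    qed
    then have "c^2 * d^2 \<le> risk n K \<sigma> a \<or> c^2 * d^2 \<le> risk n K \<sigma> b" using sum by linarith
    then show ?thesis using a b by (auto simp: c_def d_def)
  next
    case False
    define m where "m = vcomb n (1/2) a b"
    define r where "r = k * (1/2) * (1 - 1/2) * d0^2"
    have mK: "m \<in> K" using cb_convex[OF K a b] by (simp add: m_def)
    have ball: "ncball n m r \<subseteq> K"
    proof -
      have l: "(1/2::real) \<in> {0..1}" by simp
      show ?thesis using SC a b l unfolding strongly_convex_def m_def r_def d0_def by blast
    qed
    have r0: "0 < r" using k d0pos' by (simp add: r_def)
    have "2 * r \<le> d" using ball_diam[OF K n _ ball] r0 by (simp add: d_def)
    moreover have "2 * r = k * d0 * d0 / 2" by (simp add: r_def power2_eq_square)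
    ultimately have "k * d0 * d0 < 4 * d0" using dd0 by linarith
    then have kd0: "k * d0 < 4" using d0pos' by simp
    have Dlt: "D < 8 * d0" using False dd0 by simp
    have "c1 < 8 * (k * d0)"
    proof -
      have "k * D < k * (8 * d0)" using Dlt k by simp
      then show ?thesis using lo' by simp
    qed
    then have rlow: "c1 * d0 / 32 < r"
    proof -
      assume h: "c1 < 8 * (k * d0)"
      have "c1 * d0 < 8 * (k * d0) * d0" using h d0pos' by (simp add: mult_strict_right_mono)
      then show ?thesis by (simp add: r_def power2_eq_square)
    qed
    have Dlow: "c1 * d0 / 4 < D"
    proof -
      have "c1 * d0 \<le> k * D * d0" using lo' d0pos' by (simp add: mult_right_mono)
      also have "k * D * d0 = (k * d0) * D" by simp
      also have "\<dots> < 4 * D" using kd0 D0 by (simp add: mult_strict_right_mono)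
      finally show ?thesis by simp
    qed
    define fm where "fm = (\<lambda>\<xi>. (vdist n (lse n K (vadd n m \<xi>)) m)^2)"
    have im: "integrable (gauss n \<sigma>) fm" unfolding fm_def by (rule risk_int[OF K SC k mK s])
    define sc where "sc = r^2 / (r^2 + V)"
    have r20: "0 < r^2" using r0 by simp
    have rv: "0 < r^2 + V" using r20 V0 by linarith
    have sc: "0 < sc" "sc \<le> 1"
    proof -
      show "0 < sc" unfolding sc_def using r20 rv by (rule divide_pos_pos)
      show "sc \<le> 1" unfolding sc_def using rv V0 by (subst pos_divide_le_eq[OF rv]) simp
    qed
    have pt: "sc * XX n \<xi> + (-(sc^2/(4*r^2))) * (XX n \<xi>)^2 + 0 \<le> fm \<xi>" for \<xi>
    proof -
      have "min (vnorm n \<xi>) r \<le> vdist n (lse n K (vadd n m \<xi>)) m"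
        using proj_mid[OF K ball, of "vadd n m \<xi>"] r0 by (simp add: vadd_dist)
      then have "(min (vnorm n \<xi>) r)^2 \<le> fm \<xi>"
        unfolding fm_def using r0 by (intro power_mono) auto
      moreover have "(min (vnorm n \<xi>) r)^2 = min (XX n \<xi>) (r^2)"
        using r0 by (auto simp: XX_vnorm min_def power_mono intro: antisym dest: power2_le_imp_le)
      ultimately show ?thesis using min_poly[OF XX0[of \<xi>] r20 sc] by linarith
    qed
    have ipoly: "integrable (gauss n \<sigma>) (\<lambda>x. sc * XX n x + (-(sc^2/(4*r^2))) * (XX n x)^2 + 0)"
      by (rule lin_int(1)[OF EX(1) EX2(1) ps.prob_space_axioms])
    have "integral\<^sup>L (gauss n \<sigma>) (\<lambda>x. sc * XX n x + (-(sc^2/(4*r^2))) * (XX n x)^2 + 0) \<le> integral\<^sup>L (gauss n \<sigma>) fm"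
      using ipoly im pt by (intro integral_mono) auto
    also have "\<dots> = risk n K \<sigma> m" by (simp add: risk_def fm_def)
    finally have r1: "sc * V + (-(sc^2/(4*r^2))) * integral\<^sup>L (gauss n \<sigma>) (\<lambda>x. (XX n x)^2) \<le> risk n K \<sigma> m"
      using lin_int(2)[OF EX(1) EX2(1) ps.prob_space_axioms, of sc "-(sc^2/(4*r^2))" 0] EX(2)
      by simp
    have "(sc^2/(4*r^2)) * integral\<^sup>L (gauss n \<sigma>) (\<lambda>x. (XX n x)^2) \<le> (sc^2/(4*r^2)) * (3 * V^2)"
      using EX2(2) by (intro mult_left_mono) auto
    then have r2: "sc * V - (sc^2/(4*r^2)) * (3 * V^2) \<le> risk n K \<sigma> m" using r1 by linarith
    define qq where "qq = V / (r^2 + V)"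
    have qq: "0 \<le> qq" "qq \<le> 1"
    proof -
      show "0 \<le> qq" unfolding qq_def using V0 rv by simp
      show "qq \<le> 1" unfolding qq_def using r20 by (subst pos_divide_le_eq[OF rv]) simp
    qed
    have e1: "sc * V = r^2 * qq" by (simp add: sc_def qq_def)
    have aux: "\<And>R2 W :: real. R2 > 0 \<Longrightarrow> W > 0 \<Longrightarrow> ((R2/W)^2/(4*R2)) * (3 * V^2) = 3 * R2 * (V/W)^2 / 4"
      by (simp add: power2_eq_square field_simps)
    have e2: "(sc^2/(4*r^2)) * (3 * V^2) = 3 * r^2 * qq^2 / 4"
      unfolding sc_def qq_def by (rule aux[OF r20 rv])
    have "r^2 * qq / 4 \<le> r^2 * qq - 3 * r^2 * qq^2 / 4"
    proof -
      have "r^2 * qq * qq \<le> r^2 * qq * 1" using qq r20 by (intro mult_left_mono) auto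
      then have "r^2 * qq^2 \<le> r^2 * qq" by (simp add: power2_eq_square[of qq] mult.assoc)
      then show ?thesis by linarith
    qed
    then have r3: "r^2 * qq / 4 \<le> risk n K \<sigma> m" using r2 e1 e2 by linarith
    have mlow: "min (r^2) V / 2 \<le> r^2 * qq"
    proof (cases "r^2 \<le> V")
      case True
      have rV0: "0 \<le> r^2 * V" using r20 V0 by simp
      have "r^2 * V / (2 * V) \<le> r^2 * V / (r^2 + V)"
      proof (rule divide_left_mono[OF _ rV0])
        show "r^2 + V \<le> 2 * V" using True by linarith
        show "0 < 2 * V * (r^2 + V)" using V0 rv by (intro mult_pos_pos) auto
      qed
      then show ?thesis using True V0 by (simp add: qq_def min_def)
    next
      case False
      have rV0: "0 \<le> r^2 * V" using r20 V0 by simp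
      have "r^2 * V / (2 * r^2) \<le> r^2 * V / (r^2 + V)"
      proof (rule divide_left_mono[OF _ rV0])
        show "r^2 + V \<le> 2 * r^2" using False by linarith
        show "0 < 2 * r^2 * (r^2 + V)" using r20 rv by (intro mult_pos_pos) auto
      qed
      then show ?thesis using False r20 by (simp add: qq_def min_def)
    qed
    have "(c1 * d0 / 32)^2 \<le> min (r^2) V"
    proof -
      have p0: "0 \<le> c1 * d0 / 32" using c1 d0pos' by simp
      have "(c1 * d0 / 32)^2 \<le> r^2" using rlow p0 by (intro power_mono) auto
      moreover have "(c1 * d0 / 32)^2 \<le> V"
      proof -
        have "c1 * d0 / 32 \<le> D" using Dlow p0 by linarith
        then have "(c1 * d0 / 32)^2 \<le> D^2" using p0 by (intro power_mono) auto
        then show ?thesis by (simp add: DV)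
      qed
      ultimately show ?thesis by simp
    qed
    then have "(c1 * d0 / 32)^2 / 8 \<le> risk n K \<sigma> m" using mlow r3 by linarith
    moreover have "c^2 * d^2 \<le> (c1 * d0 / 32)^2 / 8"
    proof -
      have "(c1 * d0 / 32)^2 / 8 = c1^2 * d0^2 / 8192" by (simp add: power2_eq_square)
      moreover have "c1^2 * d0^2 / 10000 \<le> c1^2 * d0^2 / 8192" by (simp add: frac_le)
      ultimately show ?thesis using cd by linarith
    qed
    ultimately have "c^2 * d^2 \<le> risk n K \<sigma> m" by linarith
    then show ?thesis using mK unfolding c_def d_def by blast
  qed
qed



theorem mainTheorem17:
  fixes c1 c2 :: real
  assumes "c1 > 0" and "c2 > 0"
  shows "\<exists>c>0. \<forall>n K k \<sigma>.
           n \<ge> 1 \<and> convex_body n K \<and> k > 0 \<and> strongly_convex n k K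
           \<and> c1 / (k * sqrt (real n)) \<le> \<sigma> \<and> \<sigma> \<le> c2 / (k * sqrt (real n))
           \<longrightarrow> eps n K \<sigma> \<ge> c * diam n K"
proof -
  have c1: "c1 > 0" by fact
  define c where "c = min (c1 / (4 + c1) / 10) (c1 / 200)"
  have c0: "c > 0" using c1 by (simp add: c_def)
  show ?thesis
  proof (intro exI[of _ c] conjI allI impI c0)
    fix n K k \<sigma>
    assume H: "n \<ge> 1 \<and> convex_body n K \<and> k > 0 \<and> strongly_convex n k K
           \<and> c1 / (k * sqrt (real n)) \<le> \<sigma> \<and> \<sigma> \<le> c2 / (k * sqrt (real n))"
    then have n: "n \<ge> 1" and K: "convex_body n K" and k: "k > 0" and SC: "strongly_convex n k K"
      and lo: "c1 / (k * sqrt (real n)) \<le> \<sigma>" by auto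
    have sq: "0 < sqrt (real n)" using n by simp
    have ks: "0 < k * sqrt (real n)" using k sq by simp
    have "0 < c1 / (k * sqrt (real n))" using c1 ks by simp
    then have s: "\<sigma> > 0" using lo by linarith
    have "c1 \<le> \<sigma> * (k * sqrt (real n))" using lo ks by (simp add: pos_divide_le_eq)
    then have lo': "c1 \<le> k * (\<sigma> * sqrt (real n))" by (simp add: mult_ac)
    obtain \<mu> where \<mu>: "\<mu> \<in> K" and rb: "c^2 * (diam n K)^2 \<le> risk n K \<sigma> \<mu>"
      using main_bound[OF n K k SC c1 s lo'] by (auto simp: c_def)
    interpret ps: prob_space "gauss n \<sigma>" using gauss_ps[OF s] .
    have ub: "risk n K \<sigma> \<nu> \<le> (diam n K)^2" if \<nu>: "\<nu> \<in> K" for \<nu>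
      unfolding risk_def
    proof (rule ps.integral_le_const[OF risk_int[OF K SC k \<nu> s]])
      show "AE x in gauss n \<sigma>. (vdist n (lse n K (vadd n \<nu> x)) \<nu>)^2 \<le> (diam n K)^2"
      proof (intro always_eventually allI)
        fix x
        have "vdist n (lse n K (vadd n \<nu> x)) \<nu> \<le> diam n K"
          by (rule diam_ub[OF K lse_prop(1)[OF K] \<nu>])
        then show "(vdist n (lse n K (vadd n \<nu> x)) \<nu>)^2 \<le> (diam n K)^2"
          by (intro power_mono) auto
      qed
    qed
    have bdd: "bdd_above (risk n K \<sigma> ` K)" using ub by (intro bdd_aboveI2) auto
    have "risk n K \<sigma> \<mu> \<le> Sup (risk n K \<sigma> ` K)" using bdd \<mu> by (intro cSup_upper) auto
    then have "c^2 * (diam n K)^2 \<le> Sup (risk n K \<sigma> ` K)" using rb by linarith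
    then have "sqrt ((c * diam n K)^2) \<le> sqrt (Sup (risk n K \<sigma> ` K))"
      by (simp add: power_mult_distrib)
    moreover have "sqrt ((c * diam n K)^2) = c * diam n K"
      using c0 diam_pos[OF K n] by simp
    ultimately show "c * diam n K \<le> eps n K \<sigma>" by (simp add: eps_def)
  qed
qed

end
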